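(* Let $H$ be a graph and $k\ge2$, and suppose $G=\mathsf{TJ}_k(H)$ is triangle-free. Then any two distinct nonadjacent vertices of $G$ have at most two common neighbors.
   Context: All graphs are finite, simple, undirected. A $k$-clique of a graph $H$ is a set of $k$ pairwise adjacent vertices. For a graph $H$ and integer $k\ge1$, the Token Jumping graph $\mathsf{TJ}_k(H)$ has as vertices the $k$-cliques of $H$, and two $k$-cliques $A,B$ are adjacent iff $|A\cap B|=k-1$. *)

theory Defs
  imports Main
begin

definition simple_graph :: "'a set \<Rightarrow> ('a \<Rightarrow> 'a \<Rightarrow> bool) \<Rightarrow> bool" where
  "simple_graph V E \<longleftrightarrow> finite V \<and> (\<forall>x y. E x y \<longrightarrow> x \<in> V \<and> y \<in> V)
     \<and> (\<forall>x y. E x y \<longrightarrow> E y x) \<and> (\<forall>x. \<not> E x x)"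

definition is_clique :: "'a set \<Rightarrow> ('a \<Rightarrow> 'a \<Rightarrow> bool) \<Rightarrow> nat \<Rightarrow> 'a set \<Rightarrow> bool" where
  "is_clique V E k A \<longleftrightarrow> A \<subseteq> V \<and> finite A \<and> card A = k
     \<and> (\<forall>x\<in>A. \<forall>y\<in>A. x \<noteq> y \<longrightarrow> E x y)"

definition TJ_vertices :: "'a set \<Rightarrow> ('a \<Rightarrow> 'a \<Rightarrow> bool) \<Rightarrow> nat \<Rightarrow> 'a set set" where
  "TJ_vertices V E k = {A. is_clique V E k A}"

definition TJ_adj :: "'a set \<Rightarrow> ('a \<Rightarrow> 'a \<Rightarrow> bool) \<Rightarrow> nat \<Rightarrow> 'a set \<Rightarrow> 'a set \<Rightarrow> bool" where
  "TJ_adj V E k A B \<longleftrightarrow> is_clique V E k A \<and> is_clique V E k B \<and> card (A \<inter> B) = k - 1"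

definition triangle_free :: "'b set \<Rightarrow> ('b \<Rightarrow> 'b \<Rightarrow> bool) \<Rightarrow> bool" where
  "triangle_free W R \<longleftrightarrow> \<not> (\<exists>x\<in>W. \<exists>y\<in>W. \<exists>z\<in>W. R x y \<and> R y z \<and> R x z)"

definition common_neighbors :: "'b set \<Rightarrow> ('b \<Rightarrow> 'b \<Rightarrow> bool) \<Rightarrow> 'b \<Rightarrow> 'b \<Rightarrow> 'b set" where
  "common_neighbors W R x y = {z\<in>W. R x z \<and> R y z}"

end

theory Submission
  imports Defs
begin

theorem lemma4p6:
  fixes V :: "'a set" and E :: "'a \<Rightarrow> 'a \<Rightarrow> bool" and k :: nat and A B :: "'a set"
  assumes "simple_graph V E"
    and "k \<ge> 2"
    and "triangle_free (TJ_vertices V E k) (TJ_adj V E k)"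
    and "A \<in> TJ_vertices V E k" and "B \<in> TJ_vertices V E k"
    and "A \<noteq> B" and "\<not> TJ_adj V E k A B"
  shows "card (common_neighbors (TJ_vertices V E k) (TJ_adj V E k) A B) \<le> 2"
proof -
  let ?N = "common_neighbors (TJ_vertices V E k) (TJ_adj V E k) A B"
  have cA: "finite A" "card A = k" and cB: "finite B" "card B = k"
    using assms(4,5) by (auto simp: TJ_vertices_def is_clique_def)
  have memN: "C \<in> ?N \<Longrightarrow> C \<in> TJ_vertices V E k \<and> finite C \<and> card C = k \<and> card (A \<inter> C) = k - 1
     \<and> card (B \<inter> C) = k - 1 \<and> TJ_adj V E k A C" for C
    by (auto simp: common_neighbors_def TJ_vertices_def TJ_adj_def is_clique_def)
  show ?thesis
  proof (cases "?N = {}")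
    case True then show ?thesis by simp
  next
    case False
    then obtain C0 where C0: "C0 \<in> ?N" by blast
    note m0 = memN[OF C0]
    have sub: "(A \<inter> C0) \<union> (B \<inter> C0) \<subseteq> C0" by blast
    have "card ((A \<inter> C0) \<union> (B \<inter> C0)) \<le> k"
      using card_mono[OF _ sub] m0 by auto
    moreover have "card ((A \<inter> C0) \<union> (B \<inter> C0)) + card (A \<inter> B \<inter> C0) = (k-1) + (k-1)"
    proof -
      have e: "(A \<inter> C0) \<inter> (B \<inter> C0) = A \<inter> B \<inter> C0" by blast
      show ?thesis using card_Un_Int[of "A \<inter> C0" "B \<inter> C0"] m0 e by auto
    qed
    ultimately have "card (A \<inter> B \<inter> C0) \<ge> k - 2" using assms(2) by linarith
    hence ge: "card (A \<inter> B) \<ge> k - 2"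
      by (meson card_mono cA(1) finite_Int inf_le1 le_trans)
    have ne1: "card (A \<inter> B) \<noteq> k - 1" using assms(4,5,7)
      by (auto simp: TJ_adj_def TJ_vertices_def)
    have le: "card (A \<inter> B) \<le> k" using card_mono[OF cA(1), of "A \<inter> B"] cA by auto
    have nek: "card (A \<inter> B) \<noteq> k"
    proof
      assume "card (A \<inter> B) = k"
      hence "A \<inter> B = A" "A \<inter> B = B" using card_subset_eq cA cB
        by (metis finite_Int inf_le1 inf_le2)+
      thus False using assms(6) by auto
    qed
    have I: "card (A \<inter> B) = k - 2" using ge ne1 le nek assms(2) by linarith
    have IC: "A \<inter> B \<subseteq> C" if "C \<in> ?N" for C
    proof -
      note m = memN[OF that]
      have sub: "(A \<inter> C) \<union> (B \<inter> C) \<subseteq> C" by blast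
      have "card ((A \<inter> C) \<union> (B \<inter> C)) \<le> k"
        using card_mono[OF _ sub] m by auto
    moreover have "card ((A \<inter> C) \<union> (B \<inter> C)) + card (A \<inter> B \<inter> C) = (k-1) + (k-1)"
    proof -
      have e: "(A \<inter> C) \<inter> (B \<inter> C) = A \<inter> B \<inter> C" by blast
      show ?thesis using card_Un_Int[of "A \<inter> C" "B \<inter> C"] m e by auto
    qed
      ultimately have "card (A \<inter> B \<inter> C) \<ge> k - 2" using assms(2) by linarith
      hence "A \<inter> B \<inter> C = A \<inter> B" using I card_subset_eq[of "A \<inter> B" "A \<inter> B \<inter> C"] cA
        by (metis card_mono finite_Int inf_le1 le_antisym)
      thus ?thesis by blast
    qed
    have card1: "card (A - C) = 1" if "C \<in> ?N" for C
      using memN[OF that] card_Diff_subset_Int[of A C] cA assms(2)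
      by simp
    have inj: "inj_on (\<lambda>C. A - C) ?N"
    proof (rule inj_onI, rule ccontr)
      fix C D assume C: "C \<in> ?N" and D: "D \<in> ?N" and eq: "A - C = A - D" and ne: "C \<noteq> D"
      note mC = memN[OF C] and mD = memN[OF D]
      have "A \<inter> C = A \<inter> D" using eq by blast
      hence s: "A \<inter> C \<subseteq> C \<inter> D" by blast
      have g: "card (C \<inter> D) \<ge> k - 1" using card_mono[OF _ s] mC by auto
      have "C \<inter> D \<noteq> C"
      proof
        assume "C \<inter> D = C"
        hence "C \<subseteq> D" by blast
        hence "C = D" using card_subset_eq mC mD by metis
        thus False using ne by simp
      qed
      hence "card (C \<inter> D) < card C" using mC by (meson psubset_card_mono Int_lower1 psubsetI)
      hence "card (C \<inter> D) = k - 1" using g mC by linarith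
      hence "TJ_adj V E k C D" using mC mD by (auto simp: TJ_adj_def TJ_vertices_def)
      thus False using assms(3,4) mC mD by (auto simp: triangle_free_def)
    qed
    have img: "(\<lambda>C. A - C) ` ?N \<subseteq> (\<lambda>x. {x}) ` (A - B)"
    proof
      fix S assume "S \<in> (\<lambda>C. A - C) ` ?N"
      then obtain C where C: "C \<in> ?N" and S: "S = A - C" by blast
      obtain x where x: "A - C = {x}" using card1[OF C] card_1_singletonE by metis
      have "x \<in> A - B" using x IC[OF C] by blast
      thus "S \<in> (\<lambda>x. {x}) ` (A - B)" using S x by blast
    qed
    have "card ?N \<le> card ((\<lambda>x. {x}) ` (A - B))"
      by (rule card_inj_on_le[OF inj img]) (use cA in auto)
    also have "\<dots> \<le> card (A - B)" by (rule card_image_le) (use cA in auto)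
    also have "card (A - B) = 2" using card_Diff_subset_Int[of A B] cA I assms(2)
      by (simp add: Diff_Int2 card_Diff_subset_Int)
    finally show ?thesis .
  qed
qed

end
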